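(* Let $f^-(x)=x$ and let $f^+:[0,1]\to[0,1]$ satisfy $f^+(x)\le 2x$ for all $x\in[0,1]$. Then for all $x,y,z\in[0,1]$, writing $q=f^+(x)$, \[ ALG=y(1-z)+z(1-y)+(1-q)(1-z)+(1-q)(1-y),\qquad LP=x(1-yz)+(1-y)(1-qz)+(1-z)(1-qy), \] we have $2\,LP\ge ALG$; that is, $2LP(uvw)\ge ALG(uvw)$ for every $(+,-,-)$-triangle.
   Context: For a triangle $uvw$ with one positive edge of length $x$ and two negative edges of lengths $y,z$ (all in $[0,1]$), with cut probabilities $f^+(x)$ for the positive edge and $f^-(y),f^-(z)$ for the negative edges, the per-triangle quantities of the pivot rounding algorithm are $ALG=f^-(y)(1-f^-(z))+f^-(z)(1-f^-(y))+(1-f^+(x))(1-f^-(z))+(1-f^+(x))(1-f^-(y))$ and $LP=x(1-f^-(y)f^-(z))+(1-y)(1-f^+(x)f^-(z))+(1-z)(1-f^+(x)f^-(y))$; with $f^-(t)=t$ these are the expressions in the claim. *)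

theory Defs
  imports Main "HOL.Real"
begin

text \<open>Per-triangle quantities of the pivot rounding algorithm for a (+,-,-) triangle
with positive edge length x and negative edge lengths y, z.\<close>

definition ALG :: "(real \<Rightarrow> real) \<Rightarrow> (real \<Rightarrow> real) \<Rightarrow> real \<Rightarrow> real \<Rightarrow> real \<Rightarrow> real" where
  "ALG fp fm x y z =
     fm y * (1 - fm z) + fm z * (1 - fm y) + (1 - fp x) * (1 - fm z) + (1 - fp x) * (1 - fm y)"

definition LP :: "(real \<Rightarrow> real) \<Rightarrow> (real \<Rightarrow> real) \<Rightarrow> real \<Rightarrow> real \<Rightarrow> real \<Rightarrow> real" where
  "LP fp fm x y z =
     x * (1 - fm y * fm z) + (1 - y) * (1 - fp x * fm z) + (1 - z) * (1 - fp x * fm y)"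

end

theory Submission
  imports Defs
begin

lemma key:
  fixes q x y z :: real
  assumes "0 \<le> q" "q \<le> 1" "q \<le> 2*x" "0\<le>x" "x\<le>1" "0\<le>y" "y\<le>1" "0\<le>z" "z\<le>1"
  shows "2 * (x * (1 - y*z) + (1 - y) * (1 - q*z) + (1 - z) * (1 - q*y))
    \<ge> y*(1-z) + z*(1-y) + (1-q)*(1-z) + (1-q)*(1-y)"
proof -
  define c where "c = 2 - 3*y - 3*z + 4*y*z"
  have id: "2 * (x * (1 - y*z) + (1 - y) * (1 - q*z) + (1 - z) * (1 - q*y))
    - (y*(1-z) + z*(1-y) + (1-q)*(1-z) + (1-q)*(1-y))
    = 2*x*(1-y*z) + 2*((1-y)*(1-z)) + q*c" unfolding c_def by (simp add: algebra_simps)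
  have yz: "y*z \<le> 1" using assms by (simp add: mult_le_one)
  have p: "0 \<le> (1-y)*(1-z)" using assms by simp
  have "0 \<le> 2*x*(1-y*z) + 2*((1-y)*(1-z)) + q*c"
  proof (cases "c \<ge> 0")
    case True
    then show ?thesis using assms yz p by (simp add: mult_nonneg_nonneg)
  next
    case False
    have "q*(1-y*z) \<le> 2*x*(1-y*z)" using assms yz by (simp add: mult_right_mono)
    moreover have "q*((1-y)*(1-z)) \<le> (1-y)*(1-z)" using assms p by (simp add: mult_left_le_one_le)
    moreover have "q*(1-y*z) + q*c = 3*(q*((1-y)*(1-z)))" unfolding c_def by (simp add: algebra_simps)
    moreover have "0 \<le> q*((1-y)*(1-z))" using assms p by simp
    ultimately show ?thesis by linarith
  qed
  then show ?thesis using id by linarith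
qed

theorem lemma10:
  fixes fp fm :: "real \<Rightarrow> real"
  assumes fm_def: "\<forall>t. fm t = t"
    and fp_range: "\<forall>t\<in>{0..1}. fp t \<in> {0..1}"
    and fp_bound: "\<forall>t\<in>{0..1}. fp t \<le> 2 * t"
    and x: "x \<in> {0..1}" and y: "y \<in> {0..1}" and z: "z \<in> {0..1}"
  shows "2 * LP fp fm x y z \<ge> ALG fp fm x y z"
  using key[of "fp x" x y z] fp_range fp_bound x y z fm_def
  unfolding LP_def ALG_def by auto

end
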